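(* Consider SEMO on \textsc{LOTZ} with the Highest Diversity Contribution (HDC) parent selection, using as diversity measure either the crowding distance contribution or the hypervolume contribution with reference point $(-r,-r)$ for some $r\ge 1$. Then the expected time for finding the whole Pareto front is $O(n^2)$.
   Context: Search space $\{0,1\}^n$; objectives maximised. $\textsc{LOTZ}(x)=(\mathrm{LO}(x),\mathrm{TZ}(x))$, $\mathrm{LO}$ = number of leading ones, $\mathrm{TZ}$ = number of trailing zeros. Dominance: $y$ dominates $x$ if $f_i(y)\ge f_i(x)$ for all $i$, strictly for some $i$; weakly dominates if $\ge$ in all. Pareto set $X^*=\{1^i0^{n-i}:0\le i\le n\}$, front $F^*=f(X^* )$. SEMO with diversity-based parent selection: start with uniform random $s$, $P=\{s\}$. Each iteration: compute the diversity score of each $x\in P$ w.r.t. $P$; choose a parent by the selection mechanism; create $s'$ by flipping one uniformly random bit; if $s'$ is not dominated by any member of $P$, add it and remove all members weakly dominated by $s'$. Time = number of iterations until $f(P)=F^*$. HDC: always select an individual with the highest diversity score, ties broken uniformly at random. HVC with reference point $(r_1,r_2)$: sort population by increasing $f_1$ as $x_1,\dots,x_\mu$, set $f_1(x_0)=r_1$, $f_2(x_{\mu+1})=r_2$, $\mathrm{HVC}(x_i,P)=(f_1(x_i)-f_1(x_{i-1}))(f_2(x_i)-f_2(x_{i+1}))$. CDC: each point starts at 0; for each objective $m$, sort ascending by $f_m$, boundary points get $\infty$, intermediate $P[i]$ gets $+(f_m(P[i+1])-f_m(P[i-1]))/(f_m^{\max}-f_m^{\min})$, with $f_m^{\max},f_m^{\min}$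 the max and min values of objective $m$. *)

theory Defs
  imports "HOL-Probability.Probability" "HOL-Library.List_Lexorder"
begin

type_synonym bits = "bool list"
type_synonym popn = "bool list set"

definition LO :: "bits \<Rightarrow> nat" where
  "LO x = length (takeWhile (\<lambda>b. b) x)"

definition TZ :: "bits \<Rightarrow> nat" where
  "TZ x = length (takeWhile Not (rev x))"

definition f1 :: "bits \<Rightarrow> real" where "f1 x = real (LO x)"
definition f2 :: "bits \<Rightarrow> real" where "f2 x = real (TZ x)"

definition LOTZ :: "bits \<Rightarrow> real \<times> real" where
  "LOTZ x = (f1 x, f2 x)"

definition weakly_dominates :: "bits \<Rightarrow> bits \<Rightarrow> bool" where
  "weakly_dominates y x \<longleftrightarrow> f1 y \<ge> f1 x \<and> f2 y \<ge> f2 x"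

definition dominates :: "bits \<Rightarrow> bits \<Rightarrow> bool" where
  "dominates y x \<longleftrightarrow> weakly_dominates y x \<and> (f1 y > f1 x \<or> f2 y > f2 x)"

definition pareto_set :: "nat \<Rightarrow> bits set" where
  "pareto_set n = {replicate i True @ replicate (n - i) False | i. i \<le> n}"

definition pareto_front :: "nat \<Rightarrow> (real \<times> real) set" where
  "pareto_front n = LOTZ ` pareto_set n"

definition front_found :: "nat \<Rightarrow> popn \<Rightarrow> bool" where
  "front_found n P \<longleftrightarrow> LOTZ ` P = pareto_front n"

definition pos :: "'a list \<Rightarrow> 'a \<Rightarrow> nat" where
  "pos xs x = (LEAST i. i < length xs \<and> xs ! i = x)"

definition sorted_by :: "(bits \<Rightarrow> real) \<Rightarrow> popn \<Rightarrow> bits list" where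
  "sorted_by g P = sort_key g (sorted_list_of_set P)"

definition HVC :: "real \<Rightarrow> real \<Rightarrow> popn \<Rightarrow> bits \<Rightarrow> ereal" where
  "HVC r1 r2 P x =
     (let xs = sorted_by f1 P; i = pos xs x; k = length xs;
          prev1 = (if i = 0 then r1 else f1 (xs ! (i - 1)));
          next2 = (if i + 1 = k then r2 else f2 (xs ! (i + 1)))
      in ereal ((f1 x - prev1) * (f2 x - next2)))"

definition CD_obj :: "(bits \<Rightarrow> real) \<Rightarrow> popn \<Rightarrow> bits \<Rightarrow> ereal" where
  "CD_obj g P x =
     (let xs = sorted_by g P; i = pos xs x; k = length xs
      in if i = 0 \<or> i + 1 = k then \<infinity>
         else ereal ((g (xs ! (i + 1)) - g (xs ! (i - 1))) / (Max (g ` P) - Min (g ` P))))"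

definition CDC :: "popn \<Rightarrow> bits \<Rightarrow> ereal" where
  "CDC P x = CD_obj f1 P x + CD_obj f2 P x"

definition init_pop :: "nat \<Rightarrow> popn pmf" where
  "init_pop n = map_pmf (\<lambda>s. {s}) (pmf_of_set {x. length x = n})"

definition flip :: "bits \<Rightarrow> nat \<Rightarrow> bits" where
  "flip x i = x[i := \<not> x ! i]"

definition mutate :: "nat \<Rightarrow> bits \<Rightarrow> bits pmf" where
  "mutate n x = map_pmf (flip x) (pmf_of_set {..<n})"

definition hdc_select :: "(popn \<Rightarrow> bits \<Rightarrow> ereal) \<Rightarrow> popn \<Rightarrow> bits pmf" where
  "hdc_select d P = pmf_of_set {x \<in> P. \<forall>y \<in> P. d P y \<le> d P x}"

definition update :: "popn \<Rightarrow> bits \<Rightarrow> popn" where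
  "update P s' =
     (if \<exists>y \<in> P. dominates y s' then P
      else insert s' (P - {y \<in> P. weakly_dominates s' y}))"

definition semo_step :: "(popn \<Rightarrow> bits \<Rightarrow> ereal) \<Rightarrow> nat \<Rightarrow> popn \<Rightarrow> popn pmf" where
  "semo_step d n P = do { x \<leftarrow> hdc_select d P; s' \<leftarrow> mutate n x; return_pmf (update P s') }"

fun semo_dist :: "(popn \<Rightarrow> bits \<Rightarrow> ereal) \<Rightarrow> nat \<Rightarrow> nat \<Rightarrow> popn pmf" where
  "semo_dist d n 0 = init_pop n"
| "semo_dist d n (Suc t) =
     semo_dist d n t \<bind> (\<lambda>P. if front_found n P then return_pmf P else semo_step d n P)"

(* expected number of iterations T until f(P) = F*:  E[T] = sum_{t>=0} Pr[T > t] *)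
definition semo_expected_time :: "(popn \<Rightarrow> bits \<Rightarrow> ereal) \<Rightarrow> nat \<Rightarrow> ennreal" where
  "semo_expected_time d n =
     (\<Sum>t. ennreal (measure_pmf.prob (semo_dist d n t) {P. \<not> front_found n P}))"

end

theory Submission
  imports Defs
begin


lemma LO_le: "LO x \<le> length x"
  unfolding LO_def by (rule length_takeWhile_le)

lemma LO_nth: "j < LO x \<Longrightarrow> x ! j"
  unfolding LO_def by (metis nth_mem set_takeWhileD takeWhile_nth)

lemma LO_not: "LO x < length x \<Longrightarrow> \<not> x ! (LO x)"
  unfolding LO_def by (rule nth_length_takeWhile)

lemma LO_ge: "k \<le> length x \<Longrightarrow> (\<And>j. j < k \<Longrightarrow> x ! j) \<Longrightarrow> k \<le> LO x"
  by (metis LO_not not_le order_less_le_trans)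

lemma LO_le_k: "k < length x \<Longrightarrow> \<not> x ! k \<Longrightarrow> LO x \<le> k"
  using LO_nth not_le by blast

lemma TZ_le: "TZ x \<le> length x"
  unfolding TZ_def by (metis length_rev length_takeWhile_le)

lemma TZ_nth: "j < TZ x \<Longrightarrow> \<not> x ! (length x - 1 - j)"
proof -
  assume a: "j < TZ x"
  have j: "j < length x" using a TZ_le[of x] by simp
  have "\<not> rev x ! j" unfolding TZ_def
    using a unfolding TZ_def by (metis nth_mem set_takeWhileD takeWhile_nth)
  thus ?thesis using j by (simp add: rev_nth)
qed

lemma TZ_not: "TZ x < length x \<Longrightarrow> x ! (length x - 1 - TZ x)"
proof -
  assume a: "TZ x < length x"
  have "\<not> \<not> rev x ! TZ x" using a unfolding TZ_def
    by (metis length_rev nth_length_takeWhile)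
  thus ?thesis using a by (simp add: rev_nth)
qed

lemma TZ_ge: "k \<le> length x \<Longrightarrow> (\<And>j. j < k \<Longrightarrow> \<not> x ! (length x - 1 - j)) \<Longrightarrow> k \<le> TZ x"
  by (metis TZ_not not_le order_less_le_trans)

lemma TZ_le_k: "k < length x \<Longrightarrow> x ! (length x - 1 - k) \<Longrightarrow> TZ x \<le> k"
  using TZ_nth not_le by blast

lemma LO_TZ_le: "LO x + TZ x \<le> length x"
proof (rule ccontr)
  assume a: "\<not> ?thesis"
  hence T: "TZ x \<ge> 1" using LO_le[of x] by simp
  have "x ! (length x - TZ x)" using a T TZ_le[of x] by (intro LO_nth) simp
  moreover have "\<not> x ! (length x - 1 - (TZ x - 1))" using T by (intro TZ_nth) simp
  ultimately show False using T TZ_le[of x] by (simp add: Suc_diff_le)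
qed

definition pt :: "nat \<Rightarrow> nat \<Rightarrow> bits" where
  "pt n i = replicate i True @ replicate (n - i) False"

lemma length_pt[simp]: "i \<le> n \<Longrightarrow> length (pt n i) = n"
  by (simp add: pt_def)

lemma nth_pt: "i \<le> n \<Longrightarrow> j < n \<Longrightarrow> pt n i ! j = (j < i)"
  by (simp add: pt_def nth_append)

lemma LO_pt[simp]: "i \<le> n \<Longrightarrow> LO (pt n i) = i"
proof -
  assume i: "i \<le> n"
  have "i \<le> LO (pt n i)" using i by (intro LO_ge) (auto simp: nth_pt)
  moreover have "LO (pt n i) \<le> i"
  proof (cases "i < n")
    case True thus ?thesis using i by (intro LO_le_k) (auto simp: nth_pt)
  next
    case False thus ?thesis using i LO_le[of "pt n i"] by simp
  qed
  ultimately show ?thesis by simp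
qed

lemma TZ_pt[simp]: "i \<le> n \<Longrightarrow> TZ (pt n i) = n - i"
proof -
  assume i: "i \<le> n"
  have "n - i \<le> TZ (pt n i)" using i by (intro TZ_ge) (auto simp: nth_pt)
  moreover have "TZ (pt n i) \<le> n - i"
  proof (cases "0 < i")
    case True thus ?thesis using i by (intro TZ_le_k) (auto simp: nth_pt)
  next
    case False thus ?thesis using i TZ_le[of "pt n i"] by simp
  qed
  ultimately show ?thesis by simp
qed

lemma pt_inj: "i \<le> n \<Longrightarrow> j \<le> n \<Longrightarrow> pt n i = pt n j \<longleftrightarrow> i = j"
  by (metis LO_pt)

lemma pareto_char: "length x = n \<Longrightarrow> LO x + TZ x = n \<Longrightarrow> x = pt n (LO x)"
proof (rule nth_equalityI)
  assume l: "length x = n" and s: "LO x + TZ x = n"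
  show "length x = length (pt n (LO x))" using l s by simp
  fix j assume j: "j < length x"
  show "x ! j = pt n (LO x) ! j"
  proof (cases "j < LO x")
    case True thus ?thesis using j l s by (simp add: nth_pt LO_nth)
  next
    case False
    have "\<not> x ! (length x - 1 - (n - 1 - j))" using False j l s by (intro TZ_nth) simp
    thus ?thesis using False j l s by (simp add: nth_pt)
  qed
qed

lemma length_flip[simp]: "length (flip x i) = length x"
  by (simp add: flip_def)

lemma nth_flip: "i < length x \<Longrightarrow> flip x i ! j = (if j = i then \<not> x ! i else x ! j)"
  by (simp add: flip_def)

lemma flip_pt_up: "j < n \<Longrightarrow> flip (pt n j) j = pt n (Suc j)"
  by (rule nth_equalityI) (auto simp: nth_flip nth_pt)

lemma flip_pt_down: "0 < j \<Longrightarrow> j \<le> n \<Longrightarrow> flip (pt n j) (j - 1) = pt n (j - 1)"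
  by (rule nth_equalityI) (auto simp: nth_flip nth_pt)

lemma wd_iff: "weakly_dominates y x \<longleftrightarrow> LO y \<ge> LO x \<and> TZ y \<ge> TZ x"
  by (simp add: weakly_dominates_def f1_def f2_def)

lemma dom_iff: "dominates y x \<longleftrightarrow> LO y \<ge> LO x \<and> TZ y \<ge> TZ x \<and> (LO y > LO x \<or> TZ y > TZ x)"
  by (simp add: dominates_def wd_iff f1_def f2_def)

lemma update_dom: "z \<in> P \<Longrightarrow> dominates z y \<Longrightarrow> update P y = P"
  by (auto simp: update_def)

lemma update_single_wd: "weakly_dominates y x \<Longrightarrow> update {x} y = {y}"
  by (auto simp: update_def dom_iff wd_iff)

lemma update_pt:
  assumes "P \<subseteq> pt n ` {..n}" "j \<le> n"
  shows "update P (pt n j) = insert (pt n j) P"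
proof -
  have nd: "\<not> dominates z (pt n j)" if "z \<in> P" for z
    using that assms by (auto simp: dom_iff)
  have "{y \<in> P. weakly_dominates (pt n j) y} \<subseteq> {pt n j}"
  proof
    fix y assume y: "y \<in> {y \<in> P. weakly_dominates (pt n j) y}"
    then obtain k where k: "k \<le> n" "y = pt n k" using assms by auto
    hence "k = j" using y assms by (auto simp: wd_iff)
    thus "y \<in> {pt n j}" using k by simp
  qed
  thus ?thesis using nd unfolding update_def by auto
qed





lemma s1_step:
  assumes l: "length x = n" and s: "LO x + TZ x < n" and i: "i < n"
  shows "update {x} (flip x i) = {x} \<or>
         (update {x} (flip x i) = {flip x i} \<and> LO x + TZ x \<le> LO (flip x i) + TZ (flip x i))"
proof -
  define y where "y = flip x i"
  define L where "L = LO x"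
  define T where "T = TZ x"
  have Ln: "L < n" and Tn: "T < n" using s unfolding L_def T_def by auto
  have xL: "\<not> x ! L" using Ln l LO_not unfolding L_def by auto
  have xT: "x ! (n - 1 - T)" using Tn l TZ_not unfolding T_def by auto
  have LT: "L < n - 1 - T" proof -
    have "L \<le> n - 1 - T" using s unfolding L_def T_def by simp
    moreover have "L \<noteq> n - 1 - T" using xL xT by auto
    ultimately show ?thesis by simp
  qed
  have ly: "length y = n" using l by (simp add: y_def)
  have yn: "\<And>j. y ! j = (if j = i then \<not> x ! i else x ! j)" using i l by (simp add: y_def nth_flip)
  show ?thesis
  proof (cases "L \<le> i \<and> i \<le> n - 1 - T")
    case True
    have "L \<le> LO y"
      using True ly l yn by (intro LO_ge) (auto simp: L_def LO_nth)
    moreover have "T \<le> TZ y"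
    proof (rule TZ_ge)
      show "T \<le> length y" using Tn ly by simp
      fix j assume j: "j < T"
      have "\<not> x ! (length x - 1 - j)" using j unfolding T_def by (rule TZ_nth)
      moreover have "length y - 1 - j \<noteq> i" using j True ly Tn by auto
      ultimately show "\<not> y ! (length y - 1 - j)" using ly l yn by simp
    qed
    ultimately have "weakly_dominates y x" by (simp add: wd_iff L_def T_def)
    hence "update {x} y = {y}" by (rule update_single_wd)
    moreover have "LO x + TZ x \<le> LO y + TZ y" using \<open>L \<le> LO y\<close> \<open>T \<le> TZ y\<close>
      unfolding L_def T_def by simp
    ultimately show ?thesis unfolding y_def by blast
  next
    case False
    have "dominates x y"
    proof (cases "i < L")
      case True
      have "LO y \<le> i" using True i ly yn LO_nth[of i x] by (intro LO_le_k) (auto simp: L_def)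
      moreover have "TZ y \<le> T" using True LT ly yn xT Tn by (intro TZ_le_k) auto
      ultimately show ?thesis using True by (simp add: dom_iff L_def T_def)
    next
      case f2: False
      hence gi: "n - 1 - T < i" using False by auto
      have "L \<le> LO y" using f2 ly l yn LO_le[of x] by (intro LO_ge) (auto simp: L_def LO_nth)
      have "LO y \<le> L" using f2 gi LT Ln ly yn xL by (intro LO_le_k) auto
      have "\<not> x ! (length x - 1 - (n - 1 - i))"
        using gi i l unfolding T_def by (intro TZ_nth) auto
      hence xi: "\<not> x ! (n - 1 - (n - 1 - i))" using l by simp
      have "TZ y \<le> n - 1 - i" using gi i ly yn xi by (intro TZ_le_k) auto
      moreover have "n - 1 - i < T" using gi Tn i by linarith
      ultimately show ?thesis using \<open>L \<le> LO y\<close> \<open>LO y \<le> L\<close> by (simp add: dom_iff L_def T_def)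
    qed
    hence "update {x} y = {x}" by (intro update_dom) auto
    thus ?thesis unfolding y_def by blast
  qed
qed


lemma s1_progress:
  assumes l: "length x = n" and s: "LO x + TZ x < n"
  shows "update {x} (flip x (LO x)) = {flip x (LO x)} \<and>
         LO x + TZ x < LO (flip x (LO x)) + TZ (flip x (LO x))"
proof -
  define y where "y = flip x (LO x)"
  define L where "L = LO x"
  define T where "T = TZ x"
  have Ln: "L < n" and Tn: "T < n" using s unfolding L_def T_def by auto
  have xL: "\<not> x ! L" using Ln l LO_not unfolding L_def by auto
  have xT: "x ! (n - 1 - T)" using Tn l TZ_not unfolding T_def by auto
  have LT: "L < n - 1 - T" proof -
    have "L \<le> n - 1 - T" using s unfolding L_def T_def by simp
    moreover have "L \<noteq> n - 1 - T" using xL xT by auto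
    ultimately show ?thesis by simp
  qed
  have ly: "length y = n" using l by (simp add: y_def)
  have yn: "\<And>j. y ! j = (if j = L then \<not> x ! L else x ! j)" using Ln l by (simp add: y_def nth_flip L_def)
  have "Suc L \<le> LO y"
    using Ln ly l yn xL by (intro LO_ge) (auto simp: L_def LO_nth less_Suc_eq)
  moreover have "T \<le> TZ y"
  proof (rule TZ_ge)
    show "T \<le> length y" using Tn ly by simp
    fix j assume j: "j < T"
    have "\<not> x ! (length x - 1 - j)" using j unfolding T_def by (rule TZ_nth)
    thus "\<not> y ! (length y - 1 - j)" using j LT ly l yn by auto
  qed
  ultimately have "weakly_dominates y x" by (simp add: wd_iff L_def T_def)
  hence "update {x} y = {y}" by (rule update_single_wd)
  moreover have "LO x + TZ x < LO y + TZ y" using \<open>Suc L \<le> LO y\<close> \<open>T \<le> TZ y\<close>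
    unfolding L_def T_def by simp
  ultimately show ?thesis unfolding y_def L_def by blast
qed


lemma s2_step:
  assumes j: "j \<le> n" and i: "i < n"
  shows "dominates (pt n j) (flip (pt n j) i) \<or> (i = j \<and> j < n \<and> flip (pt n j) i = pt n (Suc j))
         \<or> (Suc i = j \<and> flip (pt n j) i = pt n i)"
proof -
  define y where "y = flip (pt n j) i"
  have ly: "length y = n" using j by (simp add: y_def)
  have yn: "\<And>k. k < n \<Longrightarrow> y ! k = (if k = i then \<not> (i < j) else k < j)"
    using i j by (simp add: y_def nth_flip nth_pt)
  consider "i = j" | "Suc i = j" | "Suc i < j" | "j < i" by linarith
  thus ?thesis
  proof cases
    case 1 thus ?thesis using i j flip_pt_up[of j n] by simp
  next
    case 2 thus ?thesis using i j flip_pt_down[of j n] by auto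
  next
    case 3
    have "LO y \<le> i" using 3 i ly yn by (intro LO_le_k) auto
    moreover have "TZ y \<le> n - j"
      using 3 i j ly yn[of "j - 1"] by (intro TZ_le_k) auto
    ultimately show ?thesis using 3 j by (simp add: dom_iff y_def)
  next
    case 4
    have "LO y \<le> j" using 4 i ly yn by (intro LO_le_k) auto
    moreover have "TZ y \<le> n - 1 - i"
      using 4 i j ly yn[of i] by (intro TZ_le_k) auto
    moreover have "n - 1 - i < n - j" using 4 i by simp
    ultimately show ?thesis using 4 by (auto simp: dom_iff y_def)
  qed
qed



definition seg :: "nat \<Rightarrow> nat \<Rightarrow> nat \<Rightarrow> popn" where
  "seg n a b = pt n ` {a..b}"

definition Inv :: "nat \<Rightarrow> popn \<Rightarrow> bool" where
  "Inv n P \<longleftrightarrow> (\<exists>x. P = {x} \<and> length x = n \<and> LO x + TZ x < n)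
      \<or> (\<exists>a b. a \<le> b \<and> b \<le> n \<and> P = seg n a b)"

definition phi :: "popn \<Rightarrow> nat" where
  "phi P = Max ((\<lambda>x. LO x + TZ x) ` P) + card P"

lemma phi_single[simp]: "phi {x} = LO x + TZ x + 1"
  by (simp add: phi_def)

lemma seg_sub: "b \<le> n \<Longrightarrow> seg n a b \<subseteq> pt n ` {..n}"
  by (auto simp: seg_def)

lemma card_seg: "b \<le> n \<Longrightarrow> card (seg n a b) = Suc b - a"
proof -
  assume b: "b \<le> n"
  have "inj_on (pt n) {a..b}" using b by (auto simp: inj_on_def pt_inj)
  thus ?thesis by (simp add: seg_def card_image)
qed

lemma phi_seg: "a \<le> b \<Longrightarrow> b \<le> n \<Longrightarrow> phi (seg n a b) = n + (Suc b - a)"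
proof -
  assume ab: "a \<le> b" "b \<le> n"
  have "(\<lambda>x. LO x + TZ x) ` seg n a b = {n}"
    using ab by (force simp: seg_def image_image)
  thus ?thesis using ab by (simp add: phi_def card_seg)
qed

lemma seg_single: "a \<le> n \<Longrightarrow> seg n a a = {pt n a}"
  by (simp add: seg_def)

lemma insert_seg:
  assumes "a \<le> b" "b \<le> n" "k \<le> n" "a \<le> Suc k" "k \<le> Suc b"
  shows "insert (pt n k) (seg n a b) = seg n (min a k) (max b k)"
proof -
  have "insert k {a..b} = {min a k..max b k}" using assms by auto
  thus ?thesis unfolding seg_def by (metis image_insert)
qed

lemma Inv_seg: "a \<le> b \<Longrightarrow> b \<le> n \<Longrightarrow> Inv n (seg n a b)"
  unfolding Inv_def by blast

lemma Inv_step: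
  assumes I: "Inv n P" and x: "x \<in> P" and i: "i < n"
  shows "Inv n (update P (flip x i)) \<and> phi P \<le> phi (update P (flip x i))"
proof -
  have "(\<exists>x. P = {x} \<and> length x = n \<and> LO x + TZ x < n)
      \<or> (\<exists>a b. a \<le> b \<and> b \<le> n \<and> P = seg n a b)" using I by (simp add: Inv_def)
  thus ?thesis
proof (elim disjE exE conjE)
  fix z assume P: "P = {z}" and l: "length z = n" and s: "LO z + TZ z < n"
  have xz: "x = z" using x P by simp
  from s1_step[OF l s i] show ?thesis
  proof (elim disjE conjE)
    assume "update {z} (flip z i) = {z}"
    thus ?thesis using P xz l s by (auto simp: Inv_def)
  next
    assume u: "update {z} (flip z i) = {flip z i}"
       and le: "LO z + TZ z \<le> LO (flip z i) + TZ (flip z i)"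
    define y where "y = flip z i"
    have ly: "length y = n" using l by (simp add: y_def)
    have "Inv n {y}"
    proof (cases "LO y + TZ y < n")
      case True thus ?thesis using ly by (auto simp: Inv_def)
    next
      case False
      hence "LO y + TZ y = n" using LO_TZ_le[of y] ly by simp
      hence "y = pt n (LO y)" using ly by (intro pareto_char) auto
      hence "{y} = seg n (LO y) (LO y)" using seg_single LO_le[of y] ly by metis
      thus ?thesis unfolding Inv_def using LO_le[of y] ly by blast
    qed
    thus ?thesis using u le P xz unfolding y_def by simp
  qed
next
  fix a b assume ab: "a \<le> b" "b \<le> n" and P: "P = seg n a b"
  obtain j where j: "a \<le> j" "j \<le> b" "x = pt n j" using x P by (auto simp: seg_def)
  have jn: "j \<le> n" using j ab by simp
  from s2_step[OF jn i] show ?thesis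
  proof (elim disjE conjE)
    assume "dominates (pt n j) (flip (pt n j) i)"
    hence "update P (flip x i) = P" using j x by (intro update_dom) auto
    thus ?thesis using I by simp
  next
    assume h: "i = j" "j < n" "flip (pt n j) i = pt n (Suc j)"
    have "update P (flip x i) = insert (pt n (Suc j)) P"
      using h j P ab by (simp add: update_pt seg_sub)
    also have "\<dots> = seg n (min a (Suc j)) (max b (Suc j))"
      using h j ab unfolding P by (intro insert_seg) auto
    finally have e: "update P (flip x i) = seg n (min a (Suc j)) (max b (Suc j))" .
    show ?thesis unfolding e using h j ab P by (auto simp: Inv_seg phi_seg)
  next
    assume h: "Suc i = j" "flip (pt n j) i = pt n i"
    have "update P (flip x i) = insert (pt n i) P"
      using h j P ab by (simp add: update_pt seg_sub)
    also have "\<dots> = seg n (min a i) (max b i)"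
      using h j ab unfolding P by (intro insert_seg) auto
    finally have e: "update P (flip x i) = seg n (min a i) (max b i)" .
    show ?thesis unfolding e using h j ab P by (auto simp: Inv_seg phi_seg)
  qed
qed
qed

lemma ff_seg: "front_found n (seg n 0 n)"
proof -
  have "pareto_set n = pt n ` {..n}" by (auto simp: pareto_set_def pt_def)
  thus ?thesis by (simp add: front_found_def pareto_front_def seg_def atLeast0AtMost)
qed

lemma Inv_phi_le: "Inv n P \<Longrightarrow> phi P \<le> 2 * n + 1"
  by (auto simp: Inv_def phi_seg)

lemma Inv_phi_nf: "Inv n P \<Longrightarrow> \<not> front_found n P \<Longrightarrow> phi P \<le> 2 * n"
proof -
  assume I: "Inv n P" and nf: "\<not> front_found n P"
  show ?thesis
  proof (cases "\<exists>a b. a \<le> b \<and> b \<le> n \<and> P = seg n a b")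
    case True
    then obtain a b where ab: "a \<le> b" "b \<le> n" "P = seg n a b" by blast
    have "\<not> (a = 0 \<and> b = n)" using nf ab ff_seg by auto
    thus ?thesis using ab by (auto simp: phi_seg)
  next
    case False thus ?thesis using I by (auto simp: Inv_def)
  qed
qed



definition MS :: "(popn \<Rightarrow> bits \<Rightarrow> ereal) \<Rightarrow> popn \<Rightarrow> popn" where
  "MS d P = {x \<in> P. \<forall>y \<in> P. d P y \<le> d P x}"

lemma MS_sub: "MS d P \<subseteq> P" by (auto simp: MS_def)

lemma MS_ne: "finite P \<Longrightarrow> P \<noteq> {} \<Longrightarrow> MS d P \<noteq> {}"
proof -
  assume f: "finite P" and ne: "P \<noteq> {}"
  have "Max (d P ` P) \<in> d P ` P" using f ne by (intro Max_in) auto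
  then obtain x where "x \<in> P" "d P x = Max (d P ` P)" by auto
  hence "x \<in> MS d P" using f by (auto simp: MS_def)
  thus ?thesis by auto
qed

lemma MS_single: "MS d {x} = {x}" by (auto simp: MS_def)

lemma finite_seg[simp]: "finite (seg n a b)" by (simp add: seg_def)

definition segl :: "nat \<Rightarrow> nat \<Rightarrow> nat \<Rightarrow> bits list" where
  "segl n a b = map (pt n) [a..<Suc b]"

lemma set_segl: "set (segl n a b) = seg n a b"
  unfolding segl_def seg_def by (simp only: set_map set_upt atLeastLessThanSuc_atLeastAtMost)

lemma distinct_segl: "b \<le> n \<Longrightarrow> distinct (segl n a b)"
  unfolding segl_def by (simp add: distinct_map inj_on_def pt_inj del: upt_Suc)

lemma nth_segl: "i < Suc b - a \<Longrightarrow> segl n a b ! i = pt n (a + i)"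
  unfolding segl_def by (simp del: upt_Suc)

lemma length_segl: "length (segl n a b) = Suc b - a"
  unfolding segl_def by (simp del: upt_Suc)

lemma map_segl: "b \<le> n \<Longrightarrow> map g (segl n a b) = map (\<lambda>i. g (pt n i)) [a..<Suc b]"
  unfolding segl_def by (simp del: upt_Suc)

lemma sorted_by_f1: "b \<le> n \<Longrightarrow> sorted_by f1 (seg n a b) = segl n a b"
proof -
  assume b: "b \<le> n"
  let ?xs = "segl n a b"
  have m: "mset (sorted_list_of_set (seg n a b)) = mset ?xs"
    using distinct_segl[OF b] by (subst set_eq_iff_mset_eq_distinct[symmetric]) (auto simp: set_segl)
  have inj: "inj_on f1 (set (sorted_list_of_set (seg n a b)))"
    using b by (auto simp: inj_on_def seg_def f1_def)
  have "map f1 ?xs = map real [a..<Suc b]" using b by (auto simp: f1_def map_segl simp del: upt_Suc)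
  hence s: "sorted (map f1 ?xs)" by (simp add: sorted_map del: upt_Suc)
  show ?thesis unfolding sorted_by_def by (rule sort_key_inj_key_eq[OF m inj s])
qed

lemma sorted_by_f2: "b \<le> n \<Longrightarrow> sorted_by f2 (seg n a b) = rev (segl n a b)"
proof -
  assume b: "b \<le> n"
  let ?xs = "rev (segl n a b)"
  have m: "mset (sorted_list_of_set (seg n a b)) = mset ?xs"
    using distinct_segl[OF b] by (subst set_eq_iff_mset_eq_distinct[symmetric]) (auto simp: set_segl)
  have inj: "inj_on f2 (set (sorted_list_of_set (seg n a b)))"
    using b by (auto simp: inj_on_def seg_def f2_def) (metis diff_diff_cancel le_trans)
  have "map f2 (segl n a b) = map (\<lambda>i. real (n - i)) [a..<Suc b]" using b
    by (auto simp: f2_def map_segl simp del: upt_Suc)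
  hence "map f2 ?xs = rev (map (\<lambda>i. real (n - i)) [a..<Suc b])" by (metis rev_map)
  moreover have "sorted (rev (map (\<lambda>i. real (n - i)) [a..<Suc b]))"
    unfolding sorted_wrt_rev sorted_wrt_map
    by (rule sorted_wrt_mono_rel[OF _ sorted_wrt_upt]) auto
  ultimately have s: "sorted (map f2 ?xs)" by simp
  show ?thesis unfolding sorted_by_def by (rule sort_key_inj_key_eq[OF m inj s])
qed

lemma pos_nth: "distinct xs \<Longrightarrow> i < length xs \<Longrightarrow> pos xs (xs ! i) = i"
  unfolding pos_def by (rule Least_equality) (auto simp: nth_eq_iff_index_eq)

lemma pos_f1: "a \<le> j \<Longrightarrow> j \<le> b \<Longrightarrow> b \<le> n \<Longrightarrow> pos (segl n a b) (pt n j) = j - a"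
proof -
  assume h: "a \<le> j" "j \<le> b" "b \<le> n"
  have e: "segl n a b ! (j - a) = pt n j" using h by (subst nth_segl) auto
  have "pos (segl n a b) (segl n a b ! (j - a)) = j - a"
    by (rule pos_nth[OF distinct_segl[OF h(3)]]) (use h in \<open>simp add: length_segl\<close>)
  thus ?thesis unfolding e .
qed

lemma pos_f2: "a \<le> j \<Longrightarrow> j \<le> b \<Longrightarrow> b \<le> n \<Longrightarrow> pos (rev (segl n a b)) (pt n j) = b - j"
proof -
  assume h: "a \<le> j" "j \<le> b" "b \<le> n"
  have d: "distinct (rev (segl n a b))" using distinct_segl[OF h(3)] by simp
  have e: "rev (segl n a b) ! (b - j) = pt n j" using h
    by (simp only: rev_nth length_segl) (subst nth_segl, auto simp: Suc_diff_le)
  have "pos (rev (segl n a b)) (rev (segl n a b) ! (b - j)) = b - j"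
    by (rule pos_nth[OF d]) (use h in \<open>simp add: length_segl\<close>)
  thus ?thesis unfolding e .
qed

lemma CD_f1_inf: "a \<le> j \<Longrightarrow> j \<le> b \<Longrightarrow> b \<le> n \<Longrightarrow>
   CD_obj f1 (seg n a b) (pt n j) = \<infinity> \<longleftrightarrow> (j = a \<or> j = b)"
  by (auto simp: CD_obj_def Let_def pos_f1 sorted_by_f1 length_segl)

lemma CD_f2_inf: "a \<le> j \<Longrightarrow> j \<le> b \<Longrightarrow> b \<le> n \<Longrightarrow>
   CD_obj f2 (seg n a b) (pt n j) = \<infinity> \<longleftrightarrow> (j = a \<or> j = b)"
  by (auto simp: CD_obj_def Let_def pos_f2 sorted_by_f2 length_segl)

lemma CD_fin: "CD_obj g P x \<noteq> \<infinity> \<Longrightarrow> CD_obj g P x < \<infinity>"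
  by (auto simp: CD_obj_def Let_def)

lemma CDC_seg_ext: "a \<le> j \<Longrightarrow> j \<le> b \<Longrightarrow> b \<le> n \<Longrightarrow> (j = a \<or> j = b) \<Longrightarrow>
   CDC (seg n a b) (pt n j) = \<infinity>"
  using CD_f1_inf CD_f2_inf by (auto simp: CDC_def)

lemma CDC_seg_int: "a < j \<Longrightarrow> j < b \<Longrightarrow> b \<le> n \<Longrightarrow> CDC (seg n a b) (pt n j) < \<infinity>"
proof -
  assume h: "a < j" "j < b" "b \<le> n"
  have 1: "CD_obj f1 (seg n a b) (pt n j) < \<infinity>" using h CD_f1_inf[of a j b n] by (intro CD_fin) auto
  have 2: "CD_obj f2 (seg n a b) (pt n j) < \<infinity>" using h CD_f2_inf[of a j b n] by (intro CD_fin) auto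
  show ?thesis using 1 2 unfolding CDC_def by (simp add: ereal_add_strict_mono2 less_PInf_Ex_of_nat)
qed

lemma HVC_seg: "a \<le> j \<Longrightarrow> j \<le> b \<Longrightarrow> b \<le> n \<Longrightarrow>
  HVC r1 r2 (seg n a b) (pt n j) =
   ereal ((real j - (if j = a then r1 else real j - 1)) *
          (real (n - j) - (if j = b then r2 else real (n - j) - 1)))"
proof -
  assume h: "a \<le> j" "j \<le> b" "b \<le> n"
  have p1: "f1 (segl n a b ! (j - a - 1)) = real j - 1" if "j \<noteq> a"
    using h that by (subst nth_segl) (auto simp: f1_def of_nat_diff)
  have p2: "f2 (segl n a b ! (j - a + 1)) = real (n - j) - 1" if "j \<noteq> b"
    using h that by (subst nth_segl) (auto simp: f2_def of_nat_diff)
  show ?thesis using h p1 p2 by (auto simp: HVC_def Let_def pos_f1 sorted_by_f1 f1_def f2_def length_segl)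
qed



lemma not_MS: "x \<in> P \<Longrightarrow> y \<in> P \<Longrightarrow> d P x < d P y \<Longrightarrow> x \<notin> MS d P"
  by (auto simp: MS_def not_le)

lemma in_MS: "x \<in> P \<Longrightarrow> (\<And>y. y \<in> P \<Longrightarrow> d P y \<le> d P x) \<Longrightarrow> x \<in> MS d P"
  by (auto simp: MS_def)

definition good_sel :: "(popn \<Rightarrow> bits \<Rightarrow> ereal) \<Rightarrow> bool" where
  "good_sel d \<longleftrightarrow> (\<forall>n a b. a < b \<and> b \<le> n \<and> \<not> (a = 0 \<and> b = n) \<longrightarrow>
      MS d (seg n a b) \<subseteq> {pt n a, pt n b} \<and>
      (\<exists>x0 \<in> MS d (seg n a b). (x0 = pt n a \<and> 0 < a) \<or> (x0 = pt n b \<and> b < n)))"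

lemma seg_mem: "x \<in> seg n a b \<Longrightarrow> \<exists>j. a \<le> j \<and> j \<le> b \<and> x = pt n j"
  by (auto simp: seg_def)

lemma pt_in_seg: "a \<le> j \<Longrightarrow> j \<le> b \<Longrightarrow> pt n j \<in> seg n a b"
  by (auto simp: seg_def)

lemma good_CDC: "good_sel CDC"
  unfolding good_sel_def
proof (intro allI impI)
  fix n a b :: nat assume h: "a < b \<and> b \<le> n \<and> \<not> (a = 0 \<and> b = n)"
  have ina: "pt n a \<in> MS CDC (seg n a b)"
    using h by (intro in_MS pt_in_seg) (auto simp: CDC_seg_ext)
  have inb: "pt n b \<in> MS CDC (seg n a b)"
    using h by (intro in_MS pt_in_seg) (auto simp: CDC_seg_ext)
  have sub: "MS CDC (seg n a b) \<subseteq> {pt n a, pt n b}"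
  proof
    fix x assume x: "x \<in> MS CDC (seg n a b)"
    then obtain j where j: "a \<le> j" "j \<le> b" "x = pt n j" using seg_mem MS_sub by blast
    show "x \<in> {pt n a, pt n b}"
    proof (rule ccontr)
      assume nx: "x \<notin> {pt n a, pt n b}"
      have "j \<noteq> a" "j \<noteq> b" using nx j by auto
      hence "a < j" "j < b" using j by auto
      hence "CDC (seg n a b) x < \<infinity>" using h j CDC_seg_int[of a j b n] by simp
      moreover have "CDC (seg n a b) (pt n a) = \<infinity>" using h by (simp add: CDC_seg_ext)
      ultimately have "CDC (seg n a b) x < CDC (seg n a b) (pt n a)" by simp
      thus False using x not_MS[of x "seg n a b" "pt n a" CDC] j h pt_in_seg[of a a b n]
        by (auto simp: pt_in_seg)
    qed
  qed
  show "MS CDC (seg n a b) \<subseteq> {pt n a, pt n b} \<and>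
      (\<exists>x0 \<in> MS CDC (seg n a b). (x0 = pt n a \<and> 0 < a) \<or> (x0 = pt n b \<and> b < n))"
    using sub ina inb h by auto
qed

lemma HVC_a: "a < b \<Longrightarrow> b \<le> n \<Longrightarrow> HVC (-r) (-r) (seg n a b) (pt n a) = ereal (real a + r)"
  by (simp add: HVC_seg)

lemma HVC_b: "a < b \<Longrightarrow> b \<le> n \<Longrightarrow> HVC (-r) (-r) (seg n a b) (pt n b) = ereal (real (n - b) + r)"
  by (simp add: HVC_seg of_nat_diff)

lemma HVC_mid: "a < j \<Longrightarrow> j < b \<Longrightarrow> b \<le> n \<Longrightarrow> HVC (-r) (-r) (seg n a b) (pt n j) = ereal 1"
  by (simp add: HVC_seg of_nat_diff)

lemma good_HVC: "r \<ge> 1 \<Longrightarrow> good_sel (HVC (-r) (-r))"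
  unfolding good_sel_def
proof (intro allI impI)
  fix n a b :: nat assume r: "r \<ge> 1" and h: "a < b \<and> b \<le> n \<and> \<not> (a = 0 \<and> b = n)"
  let ?d = "HVC (-r) (-r)" and ?P = "seg n a b"
  have ne: "MS ?d ?P \<noteq> {}" using h by (intro MS_ne) (auto simp: seg_def)
  show "MS ?d ?P \<subseteq> {pt n a, pt n b} \<and>
      (\<exists>x0 \<in> MS ?d ?P. (x0 = pt n a \<and> 0 < a) \<or> (x0 = pt n b \<and> b < n))"
  proof (cases "0 < a \<and> b < n")
    case True
    have sub: "MS ?d ?P \<subseteq> {pt n a, pt n b}"
    proof
      fix x assume x: "x \<in> MS ?d ?P"
      then obtain j where j: "a \<le> j" "j \<le> b" "x = pt n j" using seg_mem MS_sub by blast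
      show "x \<in> {pt n a, pt n b}"
      proof (rule ccontr)
        assume nx: "x \<notin> {pt n a, pt n b}"
        have "j \<noteq> a" "j \<noteq> b" using nx j by auto
        hence jj: "a < j" "j < b" using j by auto
        have "?d ?P x < ?d ?P (pt n a)" using jj j h True r by (simp add: HVC_mid HVC_a)
        thus False using x not_MS[of x ?P "pt n a" ?d] j h by (auto simp: pt_in_seg)
      qed
    qed
    thus ?thesis using ne True by blast
  next
    case False
    show ?thesis
    proof (cases "a = 0")
      case a0: True
      hence bn: "b < n" using h by auto
      have sub: "MS ?d ?P \<subseteq> {pt n b}"
      proof
        fix x assume x: "x \<in> MS ?d ?P"
        then obtain j where j: "a \<le> j" "j \<le> b" "x = pt n j" using seg_mem MS_sub by blast
        show "x \<in> {pt n b}"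
        proof (rule ccontr)
          assume nx: "x \<notin> {pt n b}"
          have "j \<noteq> b" using nx j by auto
          hence jj: "j < b" using j by auto
          have "?d ?P x < ?d ?P (pt n b)"
          proof (cases "j = a")
            case True thus ?thesis using a0 bn h r j by (simp add: HVC_a HVC_b)
          next
            case False thus ?thesis using a0 bn h r j jj by (simp add: HVC_mid HVC_b)
          qed
          thus False using x not_MS[of x ?P "pt n b" ?d] j h by (auto simp: pt_in_seg)
        qed
      qed
      thus ?thesis using ne bn by auto
    next
      case a0: False
      hence bn: "b = n" "0 < a" using h False by auto
      have sub: "MS ?d ?P \<subseteq> {pt n a}"
      proof
        fix x assume x: "x \<in> MS ?d ?P"
        then obtain j where j: "a \<le> j" "j \<le> b" "x = pt n j" using seg_mem MS_sub by blast
        show "x \<in> {pt n a}"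
        proof (rule ccontr)
          assume nx: "x \<notin> {pt n a}"
          have "j \<noteq> a" using nx j by auto
          hence jj: "a < j" using j by auto
          have "?d ?P x < ?d ?P (pt n a)"
          proof (cases "j = b")
            case True thus ?thesis using bn h r j by (simp add: HVC_a HVC_b)
          next
            case False thus ?thesis using bn h r j jj by (simp add: HVC_mid HVC_a)
          qed
          thus False using x not_MS[of x ?P "pt n a" ?d] j h by (auto simp: pt_in_seg)
        qed
      qed
      thus ?thesis using ne bn by auto
    qed
  qed
qed

lemma ext_up: "a \<le> b \<Longrightarrow> b < n \<Longrightarrow> update (seg n a b) (flip (pt n b) b) = seg n a (Suc b)"
proof -
  assume h: "a \<le> b" "b < n"
  have "update (seg n a b) (flip (pt n b) b) = insert (pt n (Suc b)) (seg n a b)"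
    using h by (simp add: flip_pt_up update_pt seg_sub)
  also have "\<dots> = seg n a (Suc b)" using h insert_seg[of a b n "Suc b"] by simp
  finally show ?thesis .
qed

lemma ext_down: "0 < a \<Longrightarrow> a \<le> b \<Longrightarrow> b \<le> n \<Longrightarrow> update (seg n a b) (flip (pt n a) (a - 1)) = seg n (a - 1) b"
proof -
  assume h: "0 < a" "a \<le> b" "b \<le> n"
  have "flip (pt n a) (a - 1) = pt n (a - 1)" using h by (intro flip_pt_down) auto
  hence "update (seg n a b) (flip (pt n a) (a - 1)) = update (seg n a b) (pt n (a - 1))" by simp
  also have "\<dots> = insert (pt n (a - 1)) (seg n a b)"
    using h by (intro update_pt seg_sub) auto
  also have "\<dots> = seg n (min a (a - 1)) (max b (a - 1))" using h by (intro insert_seg) auto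
  also have "\<dots> = seg n (a - 1) b"
  proof -
    have "min a (a - 1) = a - 1" "max b (a - 1) = b" using h by auto
    thus ?thesis by simp
  qed
  finally show ?thesis .
qed

lemma progress:
  assumes g: "good_sel d" and I: "Inv n P" and nf: "\<not> front_found n P" and n: "0 < n"
  shows "\<exists>x0 i0. x0 \<in> MS d P \<and> i0 < n \<and> card (MS d P) \<le> 2 \<and> phi P < phi (update P (flip x0 i0))"
proof -
  consider (S1) x where "P = {x}" "length x = n" "LO x + TZ x < n"
    | (S2) a b where "a \<le> b" "b \<le> n" "P = seg n a b"
    using I unfolding Inv_def by blast
  thus ?thesis
  proof cases
    case S1
    have "LO x < n" using S1 by simp
    thus ?thesis using S1 s1_progress[OF S1(2,3)] by (intro exI[of _ x] exI[of _ "LO x"]) (simp add: MS_single)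
  next
    case S2
    have nab: "\<not> (a = 0 \<and> b = n)" using nf S2 ff_seg by auto
    have up: "\<exists>x0 i0. x0 \<in> MS d P \<and> i0 < n \<and> phi P < phi (update P (flip x0 i0))"
      if "pt n b \<in> MS d P" "b < n"
      using that S2 ext_up[of a b n] phi_seg
      by (intro exI[of _ "pt n b"] exI[of _ b]) auto
    have down: "\<exists>x0 i0. x0 \<in> MS d P \<and> i0 < n \<and> phi P < phi (update P (flip x0 i0))"
      if "pt n a \<in> MS d P" "0 < a"
      using that S2 ext_down[of a b n] phi_seg
      by (intro exI[of _ "pt n a"] exI[of _ "a - 1"]) auto
    show ?thesis
    proof (cases "a = b")
      case True
      hence P1: "P = {pt n a}" using S2 by (simp add: seg_single)
      have c: "card (MS d P) \<le> 2" using P1 by (simp add: MS_single)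
      have m: "pt n a \<in> MS d P" using P1 by (simp add: MS_single)
      show ?thesis
      proof (cases "b < n")
        case True thus ?thesis using up m c \<open>a = b\<close> by blast
      next
        case False thus ?thesis using down m c nab \<open>a = b\<close> by blast
      qed
    next
      case False
      hence ab: "a < b" using S2 by simp
      from g[unfolded good_sel_def, rule_format, OF conjI[OF ab conjI[OF S2(2) nab]]]
      have sub: "MS d P \<subseteq> {pt n a, pt n b}"
        and ex: "\<exists>x0 \<in> MS d P. (x0 = pt n a \<and> 0 < a) \<or> (x0 = pt n b \<and> b < n)"
        using S2 by auto
      have c: "card (MS d P) \<le> 2"
        using card_mono[OF _ sub] card_insert_le_m1 by (metis card.empty card_insert_if finite.emptyI finite.insertI insert_absorb le_SucI one_add_one plus_1_eq_Suc singleton_insert_inj_eq card_2_iff insert_not_empty order_refl le_numeral_extra(4))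
      from ex show ?thesis using up down c by blast
    qed
  qed
qed



lemma hdc_MS: "hdc_select d P = pmf_of_set (MS d P)"
  by (simp add: hdc_select_def MS_def)

lemma finite_MS: "finite P \<Longrightarrow> finite (MS d P)"
  using MS_sub finite_subset by blast

lemma set_step:
  assumes "finite P" "P \<noteq> {}" "0 < n" "P' \<in> set_pmf (semo_step d n P)"
  shows "\<exists>x i. x \<in> MS d P \<and> i < n \<and> P' = update P (flip x i)"
  using assms MS_ne[of P d] finite_MS[of P d]
  by (auto simp: semo_step_def hdc_MS mutate_def set_pmf_of_set lessThan_empty_iff)

lemma bind_ge: "ennreal (pmf M x) * ennreal (pmf (f x) y) \<le> ennreal (pmf (bind_pmf M f) y)"
proof -
  have "ennreal (pmf M x) * ennreal (pmf (f x) y) = (\<integral>\<^sup>+ z. ennreal (pmf (f x) y) * indicator {x} z \<partial>M)"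
    by (simp add: nn_integral_cmult_indicator emeasure_pmf_single mult.commute)
  also have "\<dots> \<le> (\<integral>\<^sup>+ z. ennreal (pmf (f z) y) \<partial>M)"
    by (intro nn_integral_mono) (auto split: split_indicator)
  also have "\<dots> = ennreal (pmf (bind_pmf M f) y)" by (simp add: ennreal_pmf_bind)
  finally show ?thesis .
qed

lemma pmf_step_ge:
  assumes f: "finite P" and x0: "x0 \<in> MS d P" and i0: "i0 < n"
  shows "1 / (real (card (MS d P)) * real n) \<le> pmf (semo_step d n P) (update P (flip x0 i0))"
proof -
  have cne: "card (MS d P) > 0" using x0 finite_MS[OF f] card_gt_0_iff by blast
  have p1: "pmf (hdc_select d P) x0 = 1 / real (card (MS d P))"
  proof -
    have ne: "MS d P \<noteq> {}" using x0 by auto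
    show ?thesis using x0 by (simp add: hdc_MS pmf_of_set[OF ne finite_MS[OF f]])
  qed
  have "pmf (pmf_of_set {..<n}) i0 \<le> measure_pmf.prob (pmf_of_set {..<n}) (flip x0 -` {flip x0 i0})"
    by (simp add: measure_pmf_single[symmetric] measure_pmf.finite_measure_mono)
  hence p2: "1 / real n \<le> pmf (mutate n x0) (flip x0 i0)"
    using i0 by (simp add: mutate_def pmf_map pmf_of_set lessThan_empty_iff)
  have "ennreal (pmf (mutate n x0) (flip x0 i0)) * ennreal (pmf (return_pmf (update P (flip x0 i0))) (update P (flip x0 i0)))
        \<le> ennreal (pmf (mutate n x0 \<bind> (\<lambda>s'. return_pmf (update P s'))) (update P (flip x0 i0)))"
    by (rule bind_ge)
  hence p3: "ennreal (pmf (mutate n x0) (flip x0 i0)) \<le> ennreal (pmf (mutate n x0 \<bind> (\<lambda>s'. return_pmf (update P s'))) (update P (flip x0 i0)))"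
    by simp
  have "ennreal (pmf (hdc_select d P) x0) * ennreal (pmf (mutate n x0 \<bind> (\<lambda>s'. return_pmf (update P s'))) (update P (flip x0 i0)))
        \<le> ennreal (pmf (semo_step d n P) (update P (flip x0 i0)))"
    unfolding semo_step_def by (rule bind_ge)
  hence c4: "pmf (hdc_select d P) x0 * pmf (mutate n x0 \<bind> (\<lambda>s'. return_pmf (update P s'))) (update P (flip x0 i0))
        \<le> pmf (semo_step d n P) (update P (flip x0 i0))"
    by (simp add: ennreal_mult''[symmetric] ennreal_le_iff)
  have c3: "pmf (mutate n x0) (flip x0 i0) \<le> pmf (mutate n x0 \<bind> (\<lambda>s'. return_pmf (update P s'))) (update P (flip x0 i0))"
    using p3 by (simp add: ennreal_le_iff)
  have "1 / (real (card (MS d P)) * real n) = pmf (hdc_select d P) x0 * (1 / real n)" using p1 by simp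
  also have "\<dots> \<le> pmf (hdc_select d P) x0 * pmf (mutate n x0 \<bind> (\<lambda>s'. return_pmf (update P s'))) (update P (flip x0 i0))"
    using p2 c3 by (intro mult_left_mono) auto
  finally show ?thesis using c4 by linarith
qed

lemma dec_lemma:
  fixes M :: "'a pmf" and g :: "'a \<Rightarrow> nat"
  assumes sup: "\<And>P'. P' \<in> set_pmf M \<Longrightarrow> g P' \<le> v" and p0: "g Pz + c \<le> v"
    and pr: "1 \<le> of_nat c * ennreal (pmf M Pz)"
  shows "(\<integral>\<^sup>+P'. of_nat (g P') \<partial>M) + 1 \<le> of_nat v"
proof -
  have "(\<integral>\<^sup>+P'. of_nat (g P') \<partial>M) + 1 \<le> (\<integral>\<^sup>+P'. of_nat (g P') \<partial>M) + of_nat c * ennreal (pmf M Pz)"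
    using pr by (rule add_left_mono)
  also have "\<dots> = (\<integral>\<^sup>+P'. of_nat (g P') \<partial>M) + (\<integral>\<^sup>+P'. of_nat c * indicator {Pz} P' \<partial>M)"
    by (simp add: nn_integral_cmult_indicator emeasure_pmf_single)
  also have "\<dots> = (\<integral>\<^sup>+P'. of_nat (g P') + of_nat c * indicator {Pz} P' \<partial>M)"
    by (rule nn_integral_add[symmetric]) auto
  also have "\<dots> \<le> (\<integral>\<^sup>+P'. of_nat v \<partial>M)"
  proof (rule nn_integral_mono_AE)
    show "AE P' in M. of_nat (g P') + of_nat c * indicator {Pz} P' \<le> (of_nat v :: ennreal)"
      unfolding AE_measure_pmf_iff
    proof
      fix P' assume "P' \<in> set_pmf M"
      thus "of_nat (g P') + of_nat c * indicator {Pz} P' \<le> (of_nat v :: ennreal)"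
        using sup p0 by (cases "P' = Pz") (auto simp: of_nat_add[symmetric] simp del: of_nat_add)
    qed
  qed
  also have "\<dots> = of_nat v" by (simp add: measure_pmf.emeasure_space_1)
  finally show ?thesis .
qed



lemma chain_bound:
  fixes g :: "popn \<Rightarrow> nat"
  assumes init: "\<And>P. P \<in> set_pmf (init_pop n) \<Longrightarrow> Q P"
    and inv: "\<And>P P'. Q P \<Longrightarrow> \<not> front_found n P \<Longrightarrow> P' \<in> set_pmf (semo_step d n P) \<Longrightarrow> Q P'"
    and dec: "\<And>P. Q P \<Longrightarrow> \<not> front_found n P \<Longrightarrow>
                 (\<integral>\<^sup>+P'. of_nat (g P') \<partial>semo_step d n P) + 1 \<le> of_nat (g P)"
    and bound: "\<And>P. Q P \<Longrightarrow> g P \<le> B"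
  shows "semo_expected_time d n \<le> of_nat B"
proof -
  let ?X = "semo_dist d n"
  let ?G = "\<lambda>t. \<integral>\<^sup>+P. of_nat (g P) \<partial>?X t"
  let ?p = "\<lambda>t. ennreal (measure_pmf.prob (?X t) {P. \<not> front_found n P})"
  have supp: "\<forall>P \<in> set_pmf (?X t). Q P" for t
  proof (induction t)
    case 0 thus ?case using init by simp
  next
    case (Suc t) thus ?case using inv by (auto split: if_splits)
  qed
  have stepineq: "?p t + ?G (Suc t) \<le> ?G t" for t
  proof -
    have "?G (Suc t) = (\<integral>\<^sup>+P. (\<integral>\<^sup>+P'. of_nat (g P') \<partial>(if front_found n P then return_pmf P else semo_step d n P)) \<partial>?X t)"
      by (simp add: nn_integral_bind_pmf)
    moreover have "?p t = (\<integral>\<^sup>+P. indicator {P. \<not> front_found n P} P \<partial>?X t)"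
      by (simp add: measure_pmf.emeasure_eq_measure[symmetric])
    ultimately have "?p t + ?G (Suc t) = (\<integral>\<^sup>+P. indicator {P. \<not> front_found n P} P +
         (\<integral>\<^sup>+P'. of_nat (g P') \<partial>(if front_found n P then return_pmf P else semo_step d n P)) \<partial>?X t)"
      by (simp add: nn_integral_add)
    also have "\<dots> \<le> ?G t"
    proof (rule nn_integral_mono_AE)
      show "AE P in ?X t. indicator {P. \<not> front_found n P} P +
         (\<integral>\<^sup>+P'. of_nat (g P') \<partial>(if front_found n P then return_pmf P else semo_step d n P)) \<le> of_nat (g P)"
        unfolding AE_measure_pmf_iff
      proof
        fix P assume P: "P \<in> set_pmf (?X t)"
        show "indicator {P. \<not> front_found n P} P +
         (\<integral>\<^sup>+P'. of_nat (g P') \<partial>(if front_found n P then return_pmf P else semo_step d n P)) \<le> of_nat (g P)"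
        proof (cases "front_found n P")
          case True thus ?thesis by (simp add: nn_integral_return_pmf)
        next
          case False
          thus ?thesis using dec[of P] supp P by (simp add: add.commute)
        qed
      qed
    qed
    finally show ?thesis .
  qed
  have key: "(\<Sum>s<t. ?p s) + ?G t \<le> ?G 0" for t
  proof (induction t)
    case 0 thus ?case by simp
  next
    case (Suc t)
    have "(\<Sum>s<Suc t. ?p s) + ?G (Suc t) = (\<Sum>s<t. ?p s) + (?p t + ?G (Suc t))"
      by (simp add: add.assoc)
    also have "\<dots> \<le> (\<Sum>s<t. ?p s) + ?G t" using stepineq by (rule add_left_mono)
    also have "\<dots> \<le> ?G 0" by (rule Suc.IH)
    finally show ?case .
  qed
  have G0: "?G 0 \<le> of_nat B"
  proof -
    have "?G 0 \<le> (\<integral>\<^sup>+P. of_nat B \<partial>?X 0)"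
      using supp[of 0] bound by (intro nn_integral_mono_AE) (auto simp: AE_measure_pmf_iff)
    also have "\<dots> = of_nat B" by (simp add: measure_pmf.emeasure_space_1)
    finally show ?thesis .
  qed
  have "(\<Sum>s<t. ?p s) \<le> of_nat B" for t
    using key[of t] G0 by (meson add_increasing2 order.trans zero_le le_iff_add)
  hence "(\<Sum>t. ?p t) \<le> of_nat B"
    by (simp add: suminf_eq_SUP SUP_least)
  thus ?thesis by (simp add: semo_expected_time_def)
qed



lemma Inv_single: "length s = n \<Longrightarrow> Inv n {s}"
proof -
  assume l: "length s = n"
  show ?thesis
  proof (cases "LO s + TZ s < n")
    case True thus ?thesis using l by (auto simp: Inv_def)
  next
    case False
    hence "LO s + TZ s = n" using LO_TZ_le[of s] l by simp
    hence "s = pt n (LO s)" using l by (intro pareto_char) auto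
    hence "{s} = seg n (LO s) (LO s)" using seg_single LO_le[of s] l by metis
    thus ?thesis using Inv_seg[of "LO s" "LO s" n] LO_le[of s] l by simp
  qed
qed

lemma Inv_fin: "Inv n P \<Longrightarrow> finite P \<and> P \<noteq> {}"
  by (auto simp: Inv_def seg_def)

lemma main_bound:
  assumes g: "good_sel d" and n: "0 < n"
  shows "semo_expected_time d n \<le> ennreal (6 * (real n)^2)"
proof -
  define gg where "gg P = 2 * n * (2 * n + 1 - phi P)" for P
  have "semo_expected_time d n \<le> of_nat (2 * n * (2 * n + 1))"
  proof (rule chain_bound[where Q = "Inv n" and g = gg])
    fix P assume P: "P \<in> set_pmf (init_pop n)"
    have ne: "{x::bits. length x = n} \<noteq> {}"
    proof -
      have "replicate n True \<in> {x::bits. length x = n}" by simp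
      thus ?thesis by blast
    qed
    from P obtain s where "P = {s}" "length s = n"
      by (auto simp: init_pop_def set_pmf_of_set[OF ne finite_list_length])
    thus "Inv n P" using Inv_single[of s n] by simp
  next
    fix P P' assume I: "Inv n P" and "\<not> front_found n P" and P': "P' \<in> set_pmf (semo_step d n P)"
    then obtain x i where "x \<in> MS d P" "i < n" "P' = update P (flip x i)"
      using set_step Inv_fin n by blast
    thus "Inv n P'" using Inv_step[OF I] MS_sub by blast
  next
    fix P assume I: "Inv n P" and nf: "\<not> front_found n P"
    obtain x0 i0 where x0: "x0 \<in> MS d P" and i0: "i0 < n" and c: "card (MS d P) \<le> 2"
      and ph: "phi P < phi (update P (flip x0 i0))"
      using progress[OF g I nf n] by blast
    have fin: "finite P" using Inv_fin[OF I] by simp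
    have le2: "phi P \<le> 2 * n" using Inv_phi_nf[OF I nf] .
    show "(\<integral>\<^sup>+P'. of_nat (gg P') \<partial>semo_step d n P) + 1 \<le> of_nat (gg P)"
    proof (rule dec_lemma[where Pz = "update P (flip x0 i0)" and c = "2 * n"])
      fix P' assume "P' \<in> set_pmf (semo_step d n P)"
      then obtain x i where "x \<in> MS d P" "i < n" "P' = update P (flip x i)"
        using set_step Inv_fin[OF I] n by blast
      hence "phi P \<le> phi P'" using Inv_step[OF I] MS_sub by blast
      thus "gg P' \<le> gg P" unfolding gg_def by (intro mult_le_mono2 diff_le_mono2)
    next
      have "2 * n + 1 - phi (update P (flip x0 i0)) + 1 \<le> 2 * n + 1 - phi P" using ph le2 by linarith
      hence "2 * n * (2 * n + 1 - phi (update P (flip x0 i0)) + 1) \<le> 2 * n * (2 * n + 1 - phi P)"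
        by (rule mult_le_mono2)
      thus "gg (update P (flip x0 i0)) + 2 * n \<le> gg P" unfolding gg_def by (simp add: algebra_simps)
    next
      have cpos: "0 < card (MS d P)" using x0 finite_MS[OF fin] card_gt_0_iff by blast
      have pr: "1 / (real (card (MS d P)) * real n) \<le> pmf (semo_step d n P) (update P (flip x0 i0))"
        by (rule pmf_step_ge[OF fin x0 i0])
      have "1 / (2 * real n) \<le> 1 / (real (card (MS d P)) * real n)"
        using c cpos n by (intro divide_left_mono mult_right_mono) auto
      hence q: "1 / (2 * real n) \<le> pmf (semo_step d n P) (update P (flip x0 i0))"
        using pr by linarith
      have "real (2 * n) * (1 / (2 * real n)) \<le> real (2 * n) * pmf (semo_step d n P) (update P (flip x0 i0))"
        by (intro mult_left_mono q) auto
      moreover have "real (2 * n) * (1 / (2 * real n)) = 1" using n by simp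
      ultimately have "1 \<le> real (2 * n) * pmf (semo_step d n P) (update P (flip x0 i0))" by simp
      hence "ennreal 1 \<le> ennreal (real (2 * n) * pmf (semo_step d n P) (update P (flip x0 i0)))"
        by (rule ennreal_leI)
      thus "1 \<le> of_nat (2 * n) * ennreal (pmf (semo_step d n P) (update P (flip x0 i0)))"
        by (simp add: ennreal_mult'' ennreal_of_nat_eq_real_of_nat)
    qed
  next
    fix P show "gg P \<le> 2 * n * (2 * n + 1)" unfolding gg_def by (intro mult_le_mono2 diff_le_self)
  qed
  also have "\<dots> \<le> ennreal (6 * (real n)^2)"
  proof -
    have "real (2 * n * (2 * n + 1)) \<le> 6 * (real n)^2" using n
      by (simp add: power2_eq_square algebra_simps)
    thus ?thesis by (simp add: ennreal_of_nat_eq_real_of_nat ennreal_leI del: of_nat_mult of_nat_add)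
  qed
  finally show ?thesis .
qed

theorem theorem7:
  shows "(\<exists>C N. \<forall>n \<ge> N. semo_expected_time CDC n \<le> ennreal (C * (real n)^2))
       \<and> (\<forall>r::real. r \<ge> 1 \<longrightarrow>
            (\<exists>C N. \<forall>n \<ge> N. semo_expected_time (HVC (-r) (-r)) n \<le> ennreal (C * (real n)^2)))"
proof
  show "\<exists>C N. \<forall>n \<ge> N. semo_expected_time CDC n \<le> ennreal (C * (real n)^2)"
    using main_bound[OF good_CDC] by (intro exI[of _ 6] exI[of _ 1]) auto
  show "\<forall>r::real. r \<ge> 1 \<longrightarrow>
            (\<exists>C N. \<forall>n \<ge> N. semo_expected_time (HVC (-r) (-r)) n \<le> ennreal (C * (real n)^2))"
    using main_bound[OF good_HVC] by (intro allI impI exI[of _ 6] exI[of _ 1]) auto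
qed

end
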